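(* Let $(\mathcal E,B,\mathcal L_{\mathcal P})$ be an epistemic space, $\mathcal S$ a set of agents, and $\Phi\mapsto\succeq_\Phi$ an assignment satisfying Properties 3 and 4. Then the assignment satisfies Property 2 if and only if it satisfies the Maximality Condition.
   Context: An epistemic space: $\mathcal E$ nonempty, $B:\mathcal E\to\mathcal L_{\mathcal P}$ whose image modulo equivalence is exactly the consistent propositional formulas over a finite variable set $\mathcal P$; $\mathcal W_{\mathcal P}$ valuations, $[\![\phi]\!]$ models. Agents: well-ordered set $\mathcal S$; society: nonempty finite $N\subseteq\mathcal S$; $N$-profile: $\Phi:N\to\mathcal E$ with $E_i=\Phi(i)$, identified with $E_i$ when $N=\{i\}$; $\Phi\upharpoonright_M$ restriction; partition $\{N_1,N_2\}$ of $N$: nonempty disjoint sets with union $N$. An assignment maps each profile $\Phi$ to a total preorder $\succeq_\Phi$ on $\mathcal W_{\mathcal P}$ ($\succ$ strict part; $\max(\succeq)$ the set of maximal elements). Properties, for all societies $N$, partitions $\{N_1,N_2\}$, $N$-profiles $\Phi$, interpretations $w,w'$: (2) if $\bigwedge_{i\in N}B(E_i)\nvdash\bot$ then $[\![\bigwedge_{i\in N}B(E_i)]\!]=\max(\succeq_\Phi)$; (3) if $w\succeq_{\Phi\upharpoonright_{N_1}}w'$ and $w\succeq_{\Phi\upharpoonright_{N_2}}w'$ then $w\succeq_\Phi w'$; (4) if $w\succeq_{\Phi\upharpoonright_{N_1}}w'$ and $w\succ_{\Phi\upharpoonright_{N_2}}w'$ then $w\succ_\Phi w'$. Maximality Condition: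 for every agent $i$ and every $i$-profile $E_i$, $[\![B(E_i)]\!]=\max(\succeq_{E_i})$. *)

theory Defs
  imports Main
begin

datatype 'v form =
    Var 'v
  | Bot
  | Neg "'v form"
  | Conj "'v form" "'v form"
  | Disj "'v form" "'v form"
  | Imp "'v form" "'v form"

fun sat :: "('v \<Rightarrow> bool) \<Rightarrow> 'v form \<Rightarrow> bool" where
  "sat w (Var p) = w p"
| "sat w Bot = False"
| "sat w (Neg f) = (\<not> sat w f)"
| "sat w (Conj f g) = (sat w f \<and> sat w g)"
| "sat w (Disj f g) = (sat w f \<or> sat w g)"
| "sat w (Imp f g) = (sat w f \<longrightarrow> sat w g)"

definition models :: "'v form \<Rightarrow> ('v \<Rightarrow> bool) set" where
  "models f = {w. sat w f}"

text \<open>Consistency (phi does not entail bottom); by soundness and completeness of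
  classical propositional logic this is satisfiability.\<close>
definition consistent :: "'v form \<Rightarrow> bool" where
  "consistent f \<longleftrightarrow> models f \<noteq> {}"

text \<open>The set of epistemic states is the (nonempty) type 'e. The image of B modulo
  logical equivalence is exactly the set of consistent formulas.\<close>
definition epistemic_space :: "('e \<Rightarrow> ('v::finite) form) \<Rightarrow> bool" where
  "epistemic_space B \<longleftrightarrow>
     (\<forall>e. consistent (B e)) \<and>
     (\<forall>f. consistent f \<longrightarrow> (\<exists>e. models (B e) = models f))"

text \<open>An N-profile is a partial map
  from agents to epistemic states whose domain N (the society) is finite and nonempty.
  Restriction of a profile to M is map restriction.\<close>
definition is_profile :: "('a \<rightharpoonup> 'e) \<Rightarrow> bool" where
  "is_profile \<Phi> \<longleftrightarrow> finite (dom \<Phi>) \<and> dom \<Phi> \<noteq> {}"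

definition total_preorder :: "('w \<Rightarrow> 'w \<Rightarrow> bool) \<Rightarrow> bool" where
  "total_preorder r \<longleftrightarrow> (\<forall>x y. r x y \<or> r y x) \<and> (\<forall>x y z. r x y \<longrightarrow> r y z \<longrightarrow> r x z)"

definition strict :: "('w \<Rightarrow> 'w \<Rightarrow> bool) \<Rightarrow> 'w \<Rightarrow> 'w \<Rightarrow> bool" where
  "strict r x y \<longleftrightarrow> r x y \<and> \<not> r y x"

definition maxset :: "('w \<Rightarrow> 'w \<Rightarrow> bool) \<Rightarrow> 'w set" where
  "maxset r = {w. \<forall>w'. r w w'}"

definition assignment ::
  "((('a::wellorder) \<rightharpoonup> 'e) \<Rightarrow> ('v \<Rightarrow> bool) \<Rightarrow> ('v \<Rightarrow> bool) \<Rightarrow> bool) \<Rightarrow> bool" where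
  "assignment pref \<longleftrightarrow> (\<forall>\<Phi>. is_profile \<Phi> \<longrightarrow> total_preorder (pref \<Phi>))"

definition conj_models :: "('e \<Rightarrow> 'v form) \<Rightarrow> ('a \<rightharpoonup> 'e) \<Rightarrow> ('v \<Rightarrow> bool) set" where
  "conj_models B \<Phi> = (\<Inter>i\<in>dom \<Phi>. models (B (the (\<Phi> i))))"

definition is_partition :: "'a set \<Rightarrow> 'a set \<Rightarrow> 'a set \<Rightarrow> bool" where
  "is_partition N N1 N2 \<longleftrightarrow> N1 \<noteq> {} \<and> N2 \<noteq> {} \<and> N1 \<inter> N2 = {} \<and> N1 \<union> N2 = N"

definition property2 ::
  "('e \<Rightarrow> 'v form) \<Rightarrow> ((('a::wellorder) \<rightharpoonup> 'e) \<Rightarrow> ('v \<Rightarrow> bool) \<Rightarrow> ('v \<Rightarrow> bool) \<Rightarrow> bool) \<Rightarrow> bool" where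
  "property2 B pref \<longleftrightarrow>
     (\<forall>\<Phi>. is_profile \<Phi> \<longrightarrow> conj_models B \<Phi> \<noteq> {} \<longrightarrow> conj_models B \<Phi> = maxset (pref \<Phi>))"

definition property3 ::
  "((('a::wellorder) \<rightharpoonup> 'e) \<Rightarrow> ('v \<Rightarrow> bool) \<Rightarrow> ('v \<Rightarrow> bool) \<Rightarrow> bool) \<Rightarrow> bool" where
  "property3 pref \<longleftrightarrow>
     (\<forall>\<Phi> N1 N2 w w'. is_profile \<Phi> \<longrightarrow> is_partition (dom \<Phi>) N1 N2 \<longrightarrow>
        pref (\<Phi> |` N1) w w' \<longrightarrow> pref (\<Phi> |` N2) w w' \<longrightarrow> pref \<Phi> w w')"

definition property4 ::
  "((('a::wellorder) \<rightharpoonup> 'e) \<Rightarrow> ('v \<Rightarrow> bool) \<Rightarrow> ('v \<Rightarrow> bool) \<Rightarrow> bool) \<Rightarrow> bool" where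
  "property4 pref \<longleftrightarrow>
     (\<forall>\<Phi> N1 N2 w w'. is_profile \<Phi> \<longrightarrow> is_partition (dom \<Phi>) N1 N2 \<longrightarrow>
        pref (\<Phi> |` N1) w w' \<longrightarrow> strict (pref (\<Phi> |` N2)) w w' \<longrightarrow> strict (pref \<Phi>) w w')"

text \<open>Maximality Condition; the single-agent profile E_i is the map [i |-> E_i].\<close>
definition maximality_condition ::
  "('e \<Rightarrow> 'v form) \<Rightarrow> ((('a::wellorder) \<rightharpoonup> 'e) \<Rightarrow> ('v \<Rightarrow> bool) \<Rightarrow> ('v \<Rightarrow> bool) \<Rightarrow> bool) \<Rightarrow> bool" where
  "maximality_condition B pref \<longleftrightarrow>
     (\<forall>i e. models (B e) = maxset (pref [i \<mapsto> e]))"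

end

theory Submission
  imports Defs
begin

lemma cm_restrict:
  assumes "M \<subseteq> dom \<Phi>"
  shows "conj_models B (\<Phi> |` M) = (\<Inter>i\<in>M. models (B (the (\<Phi> i))))"
  using assms unfolding conj_models_def by (auto simp: Int_absorb1)

lemma dom_restr: "M \<subseteq> dom \<Phi> \<Longrightarrow> dom (\<Phi> |` M) = M"
  by auto

lemma max_step:
  fixes pref :: "(('a::wellorder) \<rightharpoonup> 'e) \<Rightarrow> ('v \<Rightarrow> bool) \<Rightarrow> ('v \<Rightarrow> bool) \<Rightarrow> bool"
  assumes tp: "total_preorder r"
    and v: "v \<in> maxset r" and w: "w \<notin> maxset r"
  shows "strict r v w"
proof -
  from w obtain w' where "\<not> r w w'" unfolding maxset_def by auto
  moreover have "r v w'" using v unfolding maxset_def by auto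
  ultimately have "\<not> r w v" using tp unfolding total_preorder_def by blast
  moreover have "r v w" using v unfolding maxset_def by auto
  ultimately show ?thesis unfolding strict_def by auto
qed

lemma back_dir:
  fixes B :: "'e \<Rightarrow> ('v::finite) form"
    and pref :: "(('a::wellorder) \<rightharpoonup> 'e) \<Rightarrow> ('v \<Rightarrow> bool) \<Rightarrow> ('v \<Rightarrow> bool) \<Rightarrow> bool"
  assumes A: "assignment pref"
    and P3: "property3 pref"
    and P4: "property4 pref"
    and MC: "maximality_condition B pref"
  shows "\<forall>\<Phi>. card (dom \<Phi>) = n \<longrightarrow> is_profile \<Phi> \<longrightarrow> conj_models B \<Phi> \<noteq> {} \<longrightarrow> conj_models B \<Phi> = maxset (pref \<Phi>)"
proof (induction n rule: less_induct)
  case (less n)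
  show ?case
  proof (intro allI impI)
    fix \<Phi> :: "'a \<rightharpoonup> 'e"
    assume cn: "card (dom \<Phi>) = n" and pr: "is_profile \<Phi>" and ne: "conj_models B \<Phi> \<noteq> {}"
    from pr have fin: "finite (dom \<Phi>)" and dne: "dom \<Phi> \<noteq> {}" unfolding is_profile_def by auto
    obtain i where i: "i \<in> dom \<Phi>" using dne by auto
    show "conj_models B \<Phi> = maxset (pref \<Phi>)"
    proof (cases "dom \<Phi> = {i}")
      case True
      have "\<Phi> = [i \<mapsto> the (\<Phi> i)]"
      proof
        fix x show "\<Phi> x = [i \<mapsto> the (\<Phi> i)] x"
        proof (cases "x = i")
          case True
          then show ?thesis using i by auto
        next
          case F: False
          then have "x \<notin> dom \<Phi>" using True by auto
          then show ?thesis using F by (simp add: domIff)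
        qed
      qed
      moreover have "conj_models B \<Phi> = models (B (the (\<Phi> i)))"
        using True unfolding conj_models_def by auto
      ultimately show ?thesis using MC unfolding maximality_condition_def by metis
    next
      case False
      define N1 where "N1 = {i}"
      define N2 where "N2 = dom \<Phi> - {i}"
      have N2ne: "N2 \<noteq> {}" using False i N2_def by auto
      have part: "is_partition (dom \<Phi>) N1 N2" "is_partition (dom \<Phi>) N2 N1"
        using i N2ne unfolding is_partition_def N1_def N2_def by auto
      have sub1: "N1 \<subseteq> dom \<Phi>" and sub2: "N2 \<subseteq> dom \<Phi>" using i N1_def N2_def by auto
      have c1: "card N1 < n" using cn fin False i N1_def
        by (metis card_seteq empty_subsetI insert_subset linorder_not_le)
      have c2: "card N2 < n" using cn fin i N2_def by (metis card_Diff1_less)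
      have pr1: "is_profile (\<Phi> |` N1)" using N1_def sub1 unfolding is_profile_def by auto
      have pr2: "is_profile (\<Phi> |` N2)" using N2ne sub2 fin unfolding is_profile_def
        by (simp add: Int_absorb1 finite_subset)
      have cm: "conj_models B \<Phi> = conj_models B (\<Phi> |` N1) \<inter> conj_models B (\<Phi> |` N2)"
        using cm_restrict[OF sub1] cm_restrict[OF sub2] unfolding conj_models_def N1_def N2_def
        by (auto simp: i)
      have e1: "conj_models B (\<Phi> |` N1) = maxset (pref (\<Phi> |` N1))"
      proof -
        have "conj_models B (\<Phi> |` N1) \<noteq> {}" using cm ne by auto
        then show ?thesis using less.IH[OF c1] pr1 dom_restr[OF sub1] by metis
      qed
      have e2: "conj_models B (\<Phi> |` N2) = maxset (pref (\<Phi> |` N2))"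
      proof -
        have "conj_models B (\<Phi> |` N2) \<noteq> {}" using cm ne by auto
        then show ?thesis using less.IH[OF c2] pr2 dom_restr[OF sub2] by metis
      qed
      have tp1: "total_preorder (pref (\<Phi> |` N1))" and tp2: "total_preorder (pref (\<Phi> |` N2))"
        using A pr1 pr2 unfolding assignment_def by auto
      show ?thesis
      proof
        show "conj_models B \<Phi> \<subseteq> maxset (pref \<Phi>)"
        proof
          fix w assume "w \<in> conj_models B \<Phi>"
          hence "w \<in> maxset (pref (\<Phi> |` N1))" "w \<in> maxset (pref (\<Phi> |` N2))" using cm e1 e2 by auto
          thus "w \<in> maxset (pref \<Phi>)" using P3 pr part(1) unfolding property3_def maxset_def by blast
        qed
      next
        show "maxset (pref \<Phi>) \<subseteq> conj_models B \<Phi>"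
        proof
          fix w assume wm: "w \<in> maxset (pref \<Phi>)"
          show "w \<in> conj_models B \<Phi>"
          proof (rule ccontr)
            assume nw: "w \<notin> conj_models B \<Phi>"
            obtain v where v: "v \<in> conj_models B \<Phi>" using ne by auto
            have v1: "v \<in> maxset (pref (\<Phi> |` N1))" and v2: "v \<in> maxset (pref (\<Phi> |` N2))"
              using v cm e1 e2 by auto
            have "strict (pref \<Phi>) v w"
            proof (cases "w \<in> maxset (pref (\<Phi> |` N2))")
              case True
              hence "w \<notin> maxset (pref (\<Phi> |` N1))" using nw cm e1 e2 by auto
              hence "strict (pref (\<Phi> |` N1)) v w" using max_step[OF tp1 v1] by auto
              moreover have "pref (\<Phi> |` N2) v w" using v2 unfolding maxset_def by auto
              ultimately show ?thesis using P4 pr part(2) unfolding property4_def by blast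
            next
              case False
              hence "strict (pref (\<Phi> |` N2)) v w" using max_step[OF tp2 v2] by auto
              moreover have "pref (\<Phi> |` N1) v w" using v1 unfolding maxset_def by auto
              ultimately show ?thesis using P4 pr part(1) unfolding property4_def by blast
            qed
            moreover have "pref \<Phi> w v" using wm unfolding maxset_def by auto
            ultimately show False unfolding strict_def by auto
          qed
        qed
      qed
    qed
  qed
qed

theorem mainTheorem6:
  fixes B :: "'e \<Rightarrow> ('v::finite) form"
    and pref :: "(('a::wellorder) \<rightharpoonup> 'e) \<Rightarrow> ('v \<Rightarrow> bool) \<Rightarrow> ('v \<Rightarrow> bool) \<Rightarrow> bool"
  assumes "epistemic_space B"
    and "assignment pref"
    and "property3 pref"
    and "property4 pref"
  shows "property2 B pref \<longleftrightarrow> maximality_condition B pref"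
proof
  assume P2: "property2 B pref"
  show "maximality_condition B pref"
    unfolding maximality_condition_def
  proof (intro allI)
    fix i :: 'a and e :: 'e
    have pr: "is_profile [i \<mapsto> e]" unfolding is_profile_def by auto
    have cmi: "conj_models B [i \<mapsto> e] = models (B e)" unfolding conj_models_def by auto
    have "models (B e) \<noteq> {}" using assms(1) unfolding epistemic_space_def consistent_def by auto
    thus "models (B e) = maxset (pref [i \<mapsto> e])"
      using P2 pr cmi unfolding property2_def by metis
  qed
next
  assume MC: "maximality_condition B pref"
  show "property2 B pref"
    unfolding property2_def using back_dir[OF assms(2,3,4) MC] by blast
qed

end
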